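(* Let $n\ge2$, $\boldsymbol{\lambda}=(\lambda_1,\dots,\lambda_n)$ a vector of positive integers, $\ell=\mathrm{lcm}(\lambda_1,\dots,\lambda_{n-1})$ and $\boldsymbol{\lambda}'=(\lambda_1,\dots,\lambda_{n-1},\lambda_n+\ell)$. Let $(a_1,\dots,a_n,d)$ be a minimal generator of $M(\boldsymbol{\lambda})$ of type (4), and let $a_n'$ be the smallest integer such that $\frac{a_1}{\lambda_1}+\cdots+\frac{a_{n-1}}{\lambda_{n-1}}+\frac{a_n'}{\lambda_n+\ell}\ge d$. Then $a_n'=a_n+d\ell-\frac{\ell}{\lambda_1}a_1-\cdots-\frac{\ell}{\lambda_{n-1}}a_{n-1}$, and $(a_1,\dots,a_{n-1},a_n',d)$ is a minimal generator of $M(\boldsymbol{\lambda}')$ of type (4).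
   Context: For a vector $\boldsymbol{\mu}$ of $n$ positive integers, $M(\boldsymbol{\mu})=\{(a_1,\dots,a_n,d)\in\mathbb{N}^{n+1}\mid a_1/\mu_1+\cdots+a_n/\mu_n\ge d\}$. A minimal generator of $M(\boldsymbol{\mu})$ is a nonzero element that cannot be written as the sum of two nonzero elements of $M(\boldsymbol{\mu})$. A minimal generator $(a_1,\dots,a_n,d)$ is of type (4) if $d>0$ and $a_ia_n>0$ for some $1\le i<n$. *)

theory Defs
  imports Complex_Main
begin

text \<open>Vectors of length n are functions nat => nat indexed by 0..n-1, zero outside.
An element (a_1,...,a_n,d) of N^(n+1) is represented as a pair (a, d).\<close>

definition inM :: "nat \<Rightarrow> (nat \<Rightarrow> nat) \<Rightarrow> (nat \<Rightarrow> nat) \<Rightarrow> nat \<Rightarrow> bool" where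
  "inM n mu a d \<longleftrightarrow> (\<forall>i\<ge>n. a i = 0) \<and>
     (\<Sum>i<n. real (a i) / real (mu i)) \<ge> real d"

definition is_zero_elt :: "nat \<Rightarrow> (nat \<Rightarrow> nat) \<Rightarrow> nat \<Rightarrow> bool" where
  "is_zero_elt n a d \<longleftrightarrow> (\<forall>i<n. a i = 0) \<and> d = 0"

definition minimal_generator :: "nat \<Rightarrow> (nat \<Rightarrow> nat) \<Rightarrow> (nat \<Rightarrow> nat) \<Rightarrow> nat \<Rightarrow> bool" where
  "minimal_generator n mu a d \<longleftrightarrow> inM n mu a d \<and> \<not> is_zero_elt n a d \<and>
     \<not> (\<exists>b e c f. inM n mu b e \<and> inM n mu c f \<and> \<not> is_zero_elt n b e \<and>
          \<not> is_zero_elt n c f \<and> (\<forall>i<n. a i = b i + c i) \<and> d = e + f)"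

definition type4 :: "nat \<Rightarrow> (nat \<Rightarrow> nat) \<Rightarrow> nat \<Rightarrow> bool" where
  "type4 n a d \<longleftrightarrow> d > 0 \<and> (\<exists>i<n - 1. a i * a (n - 1) > 0)"

end

theory Submission
  imports Defs
begin

lemma Kreal:
  assumes "\<forall>i<m. lam i > 0" "\<forall>i<m. lam i dvd l"
  shows "real (\<Sum>i<m. (l div lam i) * b i) = real l * (\<Sum>i<m. real (b i) / real (lam i))"
proof -
  have "real (\<Sum>i<m. (l div lam i) * b i) = (\<Sum>i<m. real l * (real (b i) / real (lam i)))"
    unfolding of_nat_sum
  proof (rule sum.cong)
    fix i assume "i \<in> {..<m}"
    then have "lam i dvd l" "lam i > 0" using assms by auto
    then show "real ((l div lam i) * b i) = real l * (real (b i) / real (lam i))"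
      by (simp add: real_of_nat_div)
  qed simp
  then show ?thesis by (simp add: sum_distrib_left)
qed

lemma inM_Suc:
  "inM (Suc m) mu b e \<longleftrightarrow> (\<forall>i\<ge>Suc m. b i = 0) \<and>
     (\<Sum>i<m. real (b i) / real (mu i)) + real (b m) / real (mu m) \<ge> real e"
  by (simp add: inM_def)

lemma transfer:
  assumes pos: "\<forall>i<Suc m. lam i > 0" and dv: "\<forall>i<m. lam i dvd l"
    and mem: "inM (Suc m) (lam(m := lam m + l)) b e"
  shows "int (b m) + int (\<Sum>i<m. (l div lam i) * b i) - int l * int e \<ge> 0 \<and>
    inM (Suc m) lam (b(m := nat (int (b m) + int (\<Sum>i<m. (l div lam i) * b i) - int l * int e))) e"
proof -
  define S where "S = (\<Sum>i<m. real (b i) / real (lam i))"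
  define K where "K = (\<Sum>i<m. (l div lam i) * b i)"
  define X where "X = int (b m) + int K - int l * int e"
  have KS: "real K = real l * S" unfolding K_def S_def by (rule Kreal) (use pos dv in auto)
  have lp: "real (lam m) > 0" using pos by auto
  have "(\<Sum>i<m. real (b i) / real ((lam(m := lam m + l)) i)) = S"
    unfolding S_def by (rule sum.cong) auto
  then have m1: "S + real (b m) / (real (lam m) + real l) \<ge> real e"
    using mem unfolding inM_Suc by simp
  then have m2: "real (b m) \<ge> (real (lam m) + real l) * (real e - S)"
    using lp by (simp add: field_simps)
  have rX: "real_of_int X = real (b m) - real l * (real e - S)"
    unfolding X_def using KS by (simp add: algebra_simps)
  have X1: "real_of_int X \<ge> real (lam m) * (real e - S)" using rX m2 by (simp add: algebra_simps)
  have X0: "real_of_int X \<ge> 0"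
  proof (cases "real e - S \<ge> 0")
    case True then show ?thesis using X1 lp by (smt (verit) mult_nonneg_nonneg)
  next
    case False then have "real l * (real e - S) \<le> 0" by (simp add: mult_nonneg_nonpos)
    then show ?thesis using rX by simp
  qed
  then have "X \<ge> 0" by simp
  moreover have "inM (Suc m) lam (b(m := nat X)) e"
  proof -
    have "(\<Sum>i<m. real ((b(m := nat X)) i) / real (lam i)) = S"
      unfolding S_def by (rule sum.cong) auto
    moreover have "real (nat X) = real_of_int X" using \<open>X \<ge> 0\<close> by simp
    moreover have "S + real_of_int X / real (lam m) \<ge> real e"
      using X1 lp by (simp add: field_simps)
    moreover have "\<forall>i\<ge>Suc m. b i = 0" using mem unfolding inM_Suc by simp
    ultimately show ?thesis unfolding inM_Suc by simp
  qed
  ultimately show ?thesis unfolding X_def K_def by simp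
qed

theorem proposition5p6:
  fixes n :: nat and lam :: "nat \<Rightarrow> nat" and a :: "nat \<Rightarrow> nat" and d :: nat
    and l :: nat and lam' :: "nat \<Rightarrow> nat" and an' :: int
  assumes "n \<ge> 2"
    and "\<forall>i<n. lam i > 0"
    and "l = Lcm (lam ` {..<n - 1})"
    and "lam' = lam(n - 1 := lam (n - 1) + l)"
    and "minimal_generator n lam a d" and "type4 n a d"
    and "(\<Sum>i<n - 1. real (a i) / real (lam i)) + real_of_int an' / real (lam' (n - 1)) \<ge> real d"
    and "\<forall>y::int. (\<Sum>i<n - 1. real (a i) / real (lam i)) + real_of_int y / real (lam' (n - 1)) \<ge> real d
                   \<longrightarrow> an' \<le> y"
  shows "real_of_int an' = real (a (n - 1)) + real d * real l
            - (\<Sum>i<n - 1. real l / real (lam i) * real (a i))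
         \<and> an' \<ge> 0 \<and> minimal_generator n lam' (a(n - 1 := nat an')) d
         \<and> type4 n (a(n - 1 := nat an')) d"
proof -
  obtain m where n: "n = Suc m" using assms(1) by (cases n) auto
  have pos: "\<forall>i<Suc m. lam i > 0" using assms(2) n by simp
  have dv: "\<forall>i<m. lam i dvd l" using assms(3) n by (auto intro: dvd_Lcm)
  have lam': "lam' = lam(m := lam m + l)" using assms(4) n by simp
  have mg: "minimal_generator (Suc m) lam a d" using assms(5) n by simp
  have memA: "inM (Suc m) lam a d" and indec: "\<not> (\<exists>b e c f. inM (Suc m) lam b e \<and> inM (Suc m) lam c f \<and> \<not> is_zero_elt (Suc m) b e \<and>
          \<not> is_zero_elt (Suc m) c f \<and> (\<forall>i<Suc m. a i = b i + c i) \<and> d = e + f)"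
    using mg unfolding minimal_generator_def by auto
  obtain j where j: "j < m" "a j > 0" and am: "a m > 0" and dpos: "d > 0"
    using assms(6) n unfolding type4_def by auto
  define S where "S = (\<Sum>i<m. real (a i) / real (lam i))"
  define K where "K = (\<Sum>i<m. (l div lam i) * a i)"
  have KS: "real K = real l * S" unfolding K_def S_def by (rule Kreal) (use pos dv in auto)
  have lp: "real (lam m) > 0" using pos by auto
  have h7: "S + real_of_int an' / (real (lam m) + real l) \<ge> real d"
    using assms(7) n lam' S_def by simp
  have h8: "\<And>y. S + real_of_int y / (real (lam m) + real l) \<ge> real d \<Longrightarrow> an' \<le> y"
    using assms(8) n lam' S_def by simp
  have a1: "S + real (a m) / real (lam m) \<ge> real d" using memA unfolding inM_Suc S_def by simp
  have a2: "S + (real (a m) - 1) / real (lam m) < real d"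
  proof (rule ccontr)
    assume nt: "\<not> ?thesis"
    have c1: "inM (Suc m) lam (a(m := a m - 1)) d"
    proof -
      have "(\<Sum>i<m. real ((a(m := a m - 1)) i) / real (lam i)) = S"
        unfolding S_def by (rule sum.cong) auto
      moreover have "real (a m - 1) = real (a m) - 1" using am by simp
      ultimately show ?thesis using nt memA unfolding inM_Suc by auto
    qed
    have c2: "inM (Suc m) lam (\<lambda>i. if i = m then 1 else 0) 0"
      unfolding inM_Suc by (simp add: sum_nonneg)
    have "inM (Suc m) lam (a(m := a m - 1)) d \<and> inM (Suc m) lam (\<lambda>i. if i = m then 1 else 0) 0 \<and>
      \<not> is_zero_elt (Suc m) (a(m := a m - 1)) d \<and> \<not> is_zero_elt (Suc m) (\<lambda>i. if i = m then 1 else 0) 0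
      \<and> (\<forall>i<Suc m. a i = (a(m := a m - 1)) i + (if i = m then 1 else 0)) \<and> d = d + 0"
      using c1 c2 dpos am unfolding is_zero_elt_def by auto
    then show False using indec by blast
  qed
  define A where "A = int (a m) + int l * int d - int K"
  have rA: "real_of_int A = real (a m) + real l * (real d - S)"
    unfolding A_def using KS by (simp add: algebra_simps)
  have "real (a m) \<ge> 1" using am by simp
  then have "(real (a m) - 1) / real (lam m) \<ge> 0" using lp by simp
  then have Dpos: "real d - S > 0" using a2 by linarith
  have A1: "S + real_of_int A / (real (lam m) + real l) \<ge> real d"
  proof -
    have "real (a m) \<ge> real (lam m) * (real d - S)" using a1 lp by (simp add: field_simps)
    then have "real_of_int A \<ge> (real (lam m) + real l) * (real d - S)" using rA by (simp add: algebra_simps)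
    then show ?thesis using lp by (simp add: field_simps)
  qed
  have A2: "real_of_int A - 1 < (real (lam m) + real l) * (real d - S)"
  proof -
    have "real (a m) - 1 < real (lam m) * (real d - S)" using a2 lp by (simp add: field_simps)
    then show ?thesis using rA by (simp add: algebra_simps)
  qed
  have "an' \<le> A" using h8 A1 by blast
  moreover have "real_of_int an' \<ge> (real (lam m) + real l) * (real d - S)"
    using h7 lp by (simp add: field_simps)
  then have "an' > A - 1" using A2 by linarith
  ultimately have anA: "an' = A" by simp
  have eq1: "real_of_int an' = real (a m) + real d * real l - (\<Sum>i<m. real l / real (lam i) * real (a i))"
  proof -
    have "(\<Sum>i<m. real l / real (lam i) * real (a i)) = real l * S"
      unfolding S_def sum_distrib_left by (rule sum.cong) auto
    then show ?thesis using anA rA by (simp add: algebra_simps)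
  qed
  have "real l * (real d - S) \<ge> 0" using Dpos by simp
  then have geam: "an' \<ge> int (a m)" using anA rA by linarith
  then have an0: "an' \<ge> 0" by simp
  define a' where "a' = a(m := nat an')"
  have t4: "type4 (Suc m) a' d" unfolding type4_def a'_def using j am dpos geam by auto
  have memA': "inM (Suc m) lam' a' d"
  proof -
    have "(\<Sum>i<m. real (a' i) / real (lam' i)) = S"
      unfolding S_def a'_def lam' by (rule sum.cong) auto
    moreover have "real (nat an') = real_of_int an'" using an0 by simp
    moreover have "\<forall>i\<ge>Suc m. a i = 0" using memA unfolding inM_Suc by simp
    ultimately show ?thesis unfolding inM_Suc using h7 by (simp add: a'_def lam')
  qed
  have nz: "\<not> is_zero_elt (Suc m) a' d" using dpos unfolding is_zero_elt_def by simp
  have indec': "\<not> (\<exists>b e c f. inM (Suc m) lam' b e \<and> inM (Suc m) lam' c f \<and> \<not> is_zero_elt (Suc m) b e \<and>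
          \<not> is_zero_elt (Suc m) c f \<and> (\<forall>i<Suc m. a' i = b i + c i) \<and> d = e + f)"
  proof
    assume "\<exists>b e c f. inM (Suc m) lam' b e \<and> inM (Suc m) lam' c f \<and> \<not> is_zero_elt (Suc m) b e \<and>
          \<not> is_zero_elt (Suc m) c f \<and> (\<forall>i<Suc m. a' i = b i + c i) \<and> d = e + f"
    then obtain b e c f where bm: "inM (Suc m) lam' b e" and cm: "inM (Suc m) lam' c f"
      and bz: "\<not> is_zero_elt (Suc m) b e" and cz: "\<not> is_zero_elt (Suc m) c f"
      and sm: "\<forall>i<Suc m. a' i = b i + c i" and de: "d = e + f" by blast
    define Kb where "Kb = (\<Sum>i<m. (l div lam i) * b i)"
    define Kc where "Kc = (\<Sum>i<m. (l div lam i) * c i)"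
    define Xb where "Xb = int (b m) + int Kb - int l * int e"
    define Xc where "Xc = int (c m) + int Kc - int l * int f"
    have tb: "Xb \<ge> 0 \<and> inM (Suc m) lam (b(m := nat Xb)) e"
      unfolding Xb_def Kb_def by (rule transfer) (use pos dv bm lam' in auto)
    have tc: "Xc \<ge> 0 \<and> inM (Suc m) lam (c(m := nat Xc)) f"
      unfolding Xc_def Kc_def by (rule transfer) (use pos dv cm lam' in auto)
    have KK: "K = Kb + Kc"
    proof -
      have "K = (\<Sum>i<m. (l div lam i) * b i + (l div lam i) * c i)"
      proof (unfold K_def, rule sum.cong)
        fix x assume "x \<in> {..<m}"
        then have "a x = b x + c x" using sm[rule_format, of x] by (auto simp: a'_def)
        then show "(l div lam x) * a x = (l div lam x) * b x + (l div lam x) * c x"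
          by (simp add: algebra_simps)
      qed simp
      then show ?thesis unfolding Kb_def Kc_def by (simp add: sum.distrib)
    qed
    have bmcm: "int (b m) + int (c m) = A" using sm anA an0 by (auto simp: a'_def)
    have s': "\<forall>i<Suc m. a i = (b(m := nat Xb)) i + (c(m := nat Xc)) i"
    proof (intro allI impI)
      fix i assume "i < Suc m"
      show "a i = (b(m := nat Xb)) i + (c(m := nat Xc)) i"
      proof (cases "i = m")
        case True
        have "Xb + Xc = int (a m)" unfolding Xb_def Xc_def using bmcm KK de
          by (simp add: A_def algebra_simps)
        then have "a m = nat Xb + nat Xc" using tb tc by linarith
        then show ?thesis using True by simp
      next
        case False then show ?thesis using sm \<open>i < Suc m\<close> by (auto simp: a'_def)
      qed
    qed
    have bz': "\<not> is_zero_elt (Suc m) (b(m := nat Xb)) e"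
    proof
      assume z: "is_zero_elt (Suc m) (b(m := nat Xb)) e"
      have "\<forall>i<m. b i = 0" using z unfolding is_zero_elt_def
        by (metis fun_upd_other less_SucI nat_neq_iff)
      have "e = 0" using z unfolding is_zero_elt_def by auto
      have "Kb = 0" unfolding Kb_def using \<open>\<forall>i<m. b i = 0\<close> by simp
      moreover have "nat Xb = 0" using z unfolding is_zero_elt_def by auto
      ultimately have "b m = 0" using tb \<open>e = 0\<close> unfolding Xb_def by simp
      then show False using bz \<open>\<forall>i<m. b i = 0\<close> \<open>e = 0\<close> unfolding is_zero_elt_def
        using less_Suc_eq by auto
    qed
    have cz': "\<not> is_zero_elt (Suc m) (c(m := nat Xc)) f"
    proof
      assume z: "is_zero_elt (Suc m) (c(m := nat Xc)) f"
      have "\<forall>i<m. c i = 0" using z unfolding is_zero_elt_def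
        by (metis fun_upd_other less_SucI nat_neq_iff)
      have "f = 0" using z unfolding is_zero_elt_def by auto
      have "Kc = 0" unfolding Kc_def using \<open>\<forall>i<m. c i = 0\<close> by simp
      moreover have "nat Xc = 0" using z unfolding is_zero_elt_def by auto
      ultimately have "c m = 0" using tc \<open>f = 0\<close> unfolding Xc_def by simp
      then show False using cz \<open>\<forall>i<m. c i = 0\<close> \<open>f = 0\<close> unfolding is_zero_elt_def
        using less_Suc_eq by auto
    qed
    show False using indec tb tc bz' cz' s' de by blast
  qed
  have "minimal_generator (Suc m) lam' a' d"
    unfolding minimal_generator_def using memA' nz indec' by blast
  then show ?thesis using eq1 an0 t4 n unfolding a'_def by simp
qed

end
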